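(* Let $n\ge2$ and let $\mathfrak{g}$ be of type $C_{n-1}$. Then \[ \widetilde{\operatorname{ps}}(\omega_{n-1})=q^{\binom{n}{2}}\operatorname{ps}(\omega_{n-1})=\operatorname{Cat}_n(q). \]
   Context: For type $C_{n-1}$, $\omega_{n-1}=\epsilon_1+\cdots+\epsilon_{n-1}$ and $\operatorname{ch}V(\omega_{n-1})$ is a Laurent polynomial in $x_1,\dots,x_{n-1}$. The principal specialization $\operatorname{ps}(\lambda)$ is $\operatorname{ch}V(\lambda)$ evaluated at $x_i=q^i$ ($1\le i\le n-1$). The normalized principal specialization is $\widetilde{\operatorname{ps}}(\lambda)=q^{-\eta}\operatorname{ps}(\lambda)$ where $\eta$ is the lowest power of $q$ occurring in $\operatorname{ps}(\lambda)$. $\operatorname{Cat}_n(q)=\frac{1}{[n+1]_q}\begin{bmatrix}2n\\ n\end{bmatrix}_q$ is the Mahonian $q$-Catalan number, where $[k]_q=1+q+\cdots+q^{k-1}$ and $\begin{bmatrix}a\\ b\end{bmatrix}_q$ is the Gaussian binomial coefficient. *)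

theory Defs
  imports "HOL-Computational_Algebra.Formal_Laurent_Series" "HOL-Combinatorics.Permutations"
begin

text \<open>Laurent polynomials in q are modelled as formal Laurent series over the rationals;
  q is fls_X and q^k for integer k is fls_X_intpow k.\<close>

type_synonym lp = "rat fls"

definition detm :: "nat \<Rightarrow> (nat \<Rightarrow> nat \<Rightarrow> 'a::comm_ring_1) \<Rightarrow> 'a" where
  "detm m M = (\<Sum>p | p permutes {1..m}. of_int (sign p) * (\<Prod>i=1..m. M i (p i)))"

text \<open>A weight mu = sum mu_i eps_i is a function nat => int (i = 1..m).
  rho_C m has coordinates rho_i = m - i + 1.  The Weyl alternant of type C_m is
  A_mu(x) = det (x_j^{mu_i} - x_j^{-mu_i}); its principal specialization x_j = q^j is: \<close>
definition altC_ps :: "nat \<Rightarrow> (nat \<Rightarrow> int) \<Rightarrow> lp" where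
  "altC_ps m mu = detm m (\<lambda>i j. fls_X_intpow (int j * mu i) - fls_X_intpow (- (int j * mu i)))"

definition rhoC :: "nat \<Rightarrow> nat \<Rightarrow> int" where
  "rhoC m i = int m - int i + 1"

text \<open>Principal specialization of ch V(lambda) for type C_m, via the Weyl character formula
  ch V(lambda) = A_{lambda+rho} / A_rho (specialization is a ring map and A_rho specializes
  to a nonzero Laurent polynomial).\<close>
definition psC :: "nat \<Rightarrow> (nat \<Rightarrow> int) \<Rightarrow> lp" where
  "psC m lam = altC_ps m (\<lambda>i. lam i + rhoC m i) / altC_ps m (rhoC m)"

definition npsC :: "nat \<Rightarrow> (nat \<Rightarrow> int) \<Rightarrow> lp" where
  "npsC m lam = fls_shift (fls_subdegree (psC m lam)) (psC m lam)"

definition omegaC :: "nat \<Rightarrow> nat \<Rightarrow> int" where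
  "omegaC m i = (if 1 \<le> i \<and> i \<le> m then 1 else 0)"

definition qint :: "nat \<Rightarrow> lp" where
  "qint k = (\<Sum>i<k. fls_X ^ i)"

definition qfact :: "nat \<Rightarrow> lp" where
  "qfact k = (\<Prod>i=1..k. qint i)"

definition qbinom :: "nat \<Rightarrow> nat \<Rightarrow> lp" where
  "qbinom a b = qfact a / (qfact b * qfact (a - b))"

definition qCat :: "nat \<Rightarrow> lp" where
  "qCat n = qbinom (2 * n) n / qint (n + 1)"

end

theory Submission
  imports Defs "Jordan_Normal_Form.Determinant"
begin


lemma det_rowscale:
  fixes c :: "nat \<Rightarrow> 'a::comm_ring_1"
  shows "det (mat n n (\<lambda>(i,j). c i * f i j)) = prod c {0..<n} * det (mat n n (\<lambda>(i,j). f i j))"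
proof -
  have "det (mat n n (\<lambda>(i,j). c i * f i j)) = (\<Sum> p \<in> {p. p permutes {0 ..< n}}.
     signof p * (\<Prod> i = 0 ..< n. c i * f i (p i)))"
    by (subst det_def'[of _ n]) (auto intro!: sum.cong prod.cong permutes_in_image)
  also have "\<dots> = (\<Sum> p \<in> {p. p permutes {0 ..< n}}. prod c {0..<n} * (signof p * (\<Prod> i = 0 ..< n. f i (p i))))"
    by (simp add: prod.distrib mult_ac)
  also have "\<dots> = prod c {0..<n} * det (mat n n (\<lambda>(i,j). f i j))"
    by (subst det_def'[of _ n]) (auto simp: sum_distrib_left intro!: sum.cong prod.cong permutes_in_image)
  finally show ?thesis .
qed

lemma vandermonde:
  fixes t :: "nat \<Rightarrow> 'a::comm_ring_1"
  shows "det (mat n n (\<lambda>(i,j). t i ^ j)) = (\<Prod>i<n. \<Prod>k<i. (t i - t k))"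
proof (induction n arbitrary: t)
  case 0
  then show ?case by simp
next
  case (Suc n)
  define A where "A = mat (Suc n) (Suc n) (\<lambda>(i,j). t i ^ j)"
  define C where "C = mat (Suc n) (Suc n) (\<lambda>(i,j). if i = j then 1 else if j = Suc i then - t 0 else (0::'a))"
  have Ac: "A \<in> carrier_mat (Suc n) (Suc n)" and Cc: "C \<in> carrier_mat (Suc n) (Suc n)"
    by (auto simp: A_def C_def)
  have detC: "det C = 1"
  proof -
    have "upper_triangular C" by (auto simp: upper_triangular_def C_def)
    hence "det C = prod_list (diag_mat C)" using det_upper_triangular Cc by blast
    also have "\<dots> = 1" unfolding prod_list_diag_prod by (simp add: C_def)
    finally show ?thesis .
  qed
  define B where "B = A * C"
  have Bij: "B $$ (i,j) = (if j = 0 then 1 else t i ^ (j - 1) * (t i - t 0))"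
    if "i < Suc n" "j < Suc n" for i j
  proof -
    have "B $$ (i,j) = (\<Sum>k<Suc n. t i ^ k * (if k = j then 1 else if j = Suc k then - t 0 else 0))"
      using that by (simp add: B_def A_def C_def scalar_prod_def atLeast0LessThan)
    also have "\<dots> = (\<Sum>k<Suc n. (if k = j then t i ^ k else 0)) + (\<Sum>k<Suc n. (if j = Suc k then - t 0 * t i ^ k else 0))"
      by (subst sum.distrib[symmetric]) (auto intro!: sum.cong)
    also have "\<dots> = t i ^ j + (if j = 0 then 0 else - t 0 * t i ^ (j - 1))"
    proof -
      have "(\<Sum>k<Suc n. (if j = Suc k then - t 0 * t i ^ k else 0)) = (if j = 0 then 0 else - t 0 * t i ^ (j - 1))"
      proof (cases j)
        case (Suc j')
        then have "(\<Sum>k<Suc n. (if j = Suc k then - t 0 * t i ^ k else 0)) = (\<Sum>k<Suc n. (if k = j' then - t 0 * t i ^ k else 0))"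
          by (intro sum.cong) auto
        then show ?thesis using Suc that by (simp add: sum.delta)
      qed simp
      then show ?thesis using that by (simp add: sum.delta)
    qed
    also have "\<dots> = (if j = 0 then 1 else t i ^ (j - 1) * (t i - t 0))"
      using that by (cases j) (auto simp: algebra_simps)
    finally show ?thesis .
  qed
  have Bc: "B \<in> carrier_mat (Suc n) (Suc n)" using Ac Cc by (simp add: B_def)
  have "det A = det B" using det_mult[OF Ac Cc] detC by (simp add: B_def)
  also have "det B = (\<Sum>j<Suc n. B $$ (0,j) * cofactor B 0 j)"
    by (rule laplace_expansion_row[OF Bc]) simp
  also have "\<dots> = cofactor B 0 0"
    by (subst sum.lessThan_Suc_shift) (simp add: Bij)
  also have "\<dots> = det (mat_delete B 0 0)" by (simp add: cofactor_def)
  also have "mat_delete B 0 0 = mat n n (\<lambda>(i,j). (t (Suc i) - t 0) * t (Suc i) ^ j)"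
    using Bc by (auto simp: mat_delete_def Bij)
  also have "det \<dots> = prod (\<lambda>i. t (Suc i) - t 0) {0..<n} * det (mat n n (\<lambda>(i,j). t (Suc i) ^ j))"
    by (rule det_rowscale)
  also have "\<dots> = (\<Prod>i<n. t (Suc i) - t 0) * (\<Prod>i<n. \<Prod>k<i. (t (Suc i) - t (Suc k)))"
    using Suc.IH[of "\<lambda>i. t (Suc i)"] by (simp add: atLeast0LessThan)
  also have "\<dots> = (\<Prod>i<Suc n. \<Prod>k<i. (t i - t k))"
    by (simp only: prod.lessThan_Suc_shift) (simp add: prod.distrib)
  finally show ?case by (simp add: A_def)
qed


lemma bij_pred: "bij_betw (\<lambda>x. x - 1) {Suc 0..m} {0..<m}"
  by (rule bij_betw_byWitness[where f'=Suc]) auto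

lemma bij_Suc: "bij_betw Suc {0..<m} {Suc 0..m}"
  by (rule bij_betw_byWitness[where f'="\<lambda>x. x - 1"]) auto

lemma shift_perm:
  assumes "q permutes {Suc 0..m}"
  shows "(\<lambda>x. if x \<in> {0..<m} then q (Suc x) - 1 else x) permutes {0..<m}"
    and "sign (\<lambda>x. if x \<in> {0..<m} then q (Suc x) - 1 else x) = sign q"
proof -
  interpret permutes_bij_finite q "{Suc 0..m}" "{0..<m}" "\<lambda>x. x - 1" Suc
    "\<lambda>x. if x \<in> {0..<m} then q (Suc x) - 1 else x"
    by unfold_locales (use assms bij_pred in auto)
  show "(\<lambda>x. if x \<in> {0..<m} then q (Suc x) - 1 else x) permutes {0..<m}" by (rule permutes_p')
  show "sign (\<lambda>x. if x \<in> {0..<m} then q (Suc x) - 1 else x) = sign q" by (rule sign_p')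
qed

lemma unshift_perm:
  assumes "p permutes {0..<m}"
  shows "(\<lambda>x. if x \<in> {Suc 0..m} then Suc (p (x - 1)) else x) permutes {Suc 0..m}"
    and "sign (\<lambda>x. if x \<in> {Suc 0..m} then Suc (p (x - 1)) else x) = sign p"
proof -
  interpret permutes_bij_finite p "{0..<m}" "{Suc 0..m}" Suc "\<lambda>x. x - 1"
    "\<lambda>x. if x \<in> {Suc 0..m} then Suc (p (x - 1)) else x"
    by unfold_locales (use assms bij_Suc in auto)
  show "(\<lambda>x. if x \<in> {Suc 0..m} then Suc (p (x - 1)) else x) permutes {Suc 0..m}" by (rule permutes_p')
  show "sign (\<lambda>x. if x \<in> {Suc 0..m} then Suc (p (x - 1)) else x) = sign p" by (rule sign_p')
qed

lemma detm_jnf: "detm m M = det (mat m m (\<lambda>(i,j). M (Suc i) (Suc j)))"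
proof -
  have "det (mat m m (\<lambda>(i,j). M (Suc i) (Suc j))) =
     (\<Sum>p\<in>{p. p permutes {0 ..< m}}. signof p * (\<Prod>i = 0 ..< m. M (Suc i) (Suc (p i))))"
    by (subst det_def'[of _ m]) (auto intro!: sum.cong prod.cong permutes_in_image)
  also have "\<dots> = detm m M"
    unfolding detm_def
    apply (rule sum.reindex_bij_witness[of _ "\<lambda>q. (\<lambda>x. if x \<in> {0..<m} then q (Suc x) - 1 else x)"
          "\<lambda>p. (\<lambda>x. if x \<in> {Suc 0..m} then Suc (p (x - 1)) else x)"])
    subgoal for p
      using permutes_not_in[of p "{0..<m}"] by (auto simp: fun_eq_iff)
    subgoal for p using unshift_perm(1)[of p m] by simp
    subgoal premises prems for q
    proof (rule ext)
      fix x
      have q': "q permutes {Suc 0..m}" using prems by simp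
      show "(if x \<in> {Suc 0..m} then Suc (if x - 1 \<in> {0..<m} then q (Suc (x - 1)) - 1 else x - 1) else x) = q x"
      proof (cases "x \<in> {Suc 0..m}")
        case True
        hence x1: "Suc (x - 1) = x" "x - 1 < m" by auto
        have "q x \<in> {Suc 0..m}" using permutes_in_image[OF q'] True by simp
        hence "Suc (q x - 1) = q x" by auto
        thus ?thesis using True x1 by simp
      next
        case False
        thus ?thesis using permutes_not_in[OF q' False] by simp
      qed
    qed
    subgoal for q using shift_perm(1)[of q m] by simp
    subgoal for p
    proof -
      assume "p \<in> {p. p permutes {0..<m}}"
      hence p': "p permutes {0..<m}" by simp
      have "(\<Prod>i = 1..m. M i (if i \<in> {Suc 0..m} then Suc (p (i - 1)) else i))
          = (\<Prod>i = 0..<m. M (Suc i) (if Suc i \<in> {Suc 0..m} then Suc (p (Suc i - 1)) else Suc i))"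
        by (simp add: prod.atLeast1_atMost_eq atLeast0LessThan)
      also have "\<dots> = (\<Prod>i = 0..<m. M (Suc i) (Suc (p i)))"
        by (intro prod.cong) auto
      finally show ?thesis using unshift_perm(2)[OF p'] by simp
    qed
    done
  finally show ?thesis ..
qed

fun chebU :: "nat \<Rightarrow> 'a::comm_ring_1 poly" where
  "chebU 0 = 1"
| "chebU (Suc 0) = [:0,1:]"
| "chebU (Suc (Suc n)) = pCons 0 (chebU (Suc n)) - chebU n"

lemma chebU_coeff: "coeff (chebU n :: 'a::comm_ring_1 poly) n = 1 \<and> (\<forall>k>n. coeff (chebU n :: 'a poly) k = 0)"
proof (induction n rule: chebU.induct)
  case (3 n)
  show ?case using 3 conjunct2[OF 3(1), rule_format, of "Suc (Suc n)"] conjunct2[OF 3(2), rule_format, of "Suc (Suc n)"] by (auto simp: coeff_pCons split: nat.split)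
qed (auto simp: coeff_pCons split: nat.split)

lemma chebU_eval:
  fixes z w :: "'a::comm_ring_1"
  assumes zw: "z * w = 1"
  shows "(z - w) * poly (chebU n) (z + w) = z ^ Suc n - w ^ Suc n"
proof (induction n rule: chebU.induct)
  case 1 then show ?case by simp
next
  case 2 then show ?case using zw by (simp add: algebra_simps power2_eq_square)
next
  case (3 n)
  have a: "z * w ^ Suc (Suc n) = w ^ Suc n" using zw by (simp add: power_Suc mult.assoc[symmetric])
  have b: "w * z ^ Suc (Suc n) = z ^ Suc n" using zw by (simp add: power_Suc mult.assoc[symmetric] mult.commute)
  have "(z - w) * poly (chebU (Suc (Suc n))) (z + w)
      = (z + w) * ((z - w) * poly (chebU (Suc n)) (z + w)) - (z - w) * poly (chebU n) (z + w)"
    by (simp add: algebra_simps)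
  also have "\<dots> = (z + w) * (z ^ Suc (Suc n) - w ^ Suc (Suc n)) - (z ^ Suc n - w ^ Suc n)"
    using 3 by simp
  also have "\<dots> = z ^ Suc (Suc (Suc n)) - w ^ Suc (Suc (Suc n)) + (w * z ^ Suc (Suc n) - z ^ Suc n) - (z * w ^ Suc (Suc n) - w ^ Suc n)"
    by (simp add: algebra_simps)
  also have "\<dots> = z ^ Suc (Suc (Suc n)) - w ^ Suc (Suc (Suc n))" using a b by simp
  finally show ?case .
qed

lemma poly_sum_lt:
  fixes p :: "'a::comm_ring_1 poly"
  assumes "degree p < n"
  shows "poly p x = (\<Sum>k<n. coeff p k * x ^ k)"
proof -
  have "poly p x = (\<Sum>k\<le>degree p. coeff p k * x ^ k)" by (rule poly_altdef)
  also have "\<dots> = (\<Sum>k<n. coeff p k * x ^ k)"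
    using assms by (intro sum.mono_neutral_left) (auto simp: coeff_eq_0)
  finally show ?thesis .
qed

lemma det_cheb:
  fixes z w :: "nat \<Rightarrow> 'a::comm_ring_1"
  assumes zw: "\<And>i. z i * w i = 1"
  shows "det (mat n n (\<lambda>(i,j). z i ^ Suc j - w i ^ Suc j))
     = (\<Prod>i<n. z i - w i) * (\<Prod>i<n. \<Prod>k<i. ((z i + w i) - (z k + w k)))"
proof -
  define t where "t i = z i + w i" for i
  have "mat n n (\<lambda>(i,j). z i ^ Suc j - w i ^ Suc j) = mat n n (\<lambda>(i,j). (z i - w i) * poly (chebU j) (t i))"
    by (rule cong_mat) (simp_all add: chebU_eval[OF zw] t_def)
  hence "det (mat n n (\<lambda>(i,j). z i ^ Suc j - w i ^ Suc j)) = prod (\<lambda>i. z i - w i) {0..<n} * det (mat n n (\<lambda>(i,j). poly (chebU j) (t i)))"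
    by (simp only: det_rowscale)
  moreover have "det (mat n n (\<lambda>(i,j). poly (chebU j) (t i))) = det (mat n n (\<lambda>(i,j). t i ^ j))"
  proof -
    define V where "V = mat n n (\<lambda>(i,j). t i ^ j)"
    define T where "T = mat n n (\<lambda>(k,j). coeff (chebU j) k :: 'a)"
    have Vc: "V \<in> carrier_mat n n" and Tc: "T \<in> carrier_mat n n" by (auto simp: V_def T_def)
    have detT: "det T = 1"
    proof -
      have "upper_triangular T" using chebU_coeff by (auto simp: upper_triangular_def T_def)
      hence "det T = prod_list (diag_mat T)" using det_upper_triangular Tc by blast
      also have "\<dots> = 1" unfolding prod_list_diag_prod by (simp add: T_def chebU_coeff)
      finally show ?thesis .
    qed
    have deg: "degree (chebU j :: 'a poly) < Suc j" for j
    proof -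
      have "degree (chebU j :: 'a poly) \<le> j"
        using conjunct2[OF chebU_coeff[of j, where 'a='a]] by (intro degree_le) auto
      thus ?thesis by simp
    qed
    have "mat n n (\<lambda>(i,j). poly (chebU j) (t i)) = V * T"
    proof (rule eq_matI)
      fix i j assume ij: "i < dim_row (V * T)" "j < dim_col (V * T)"
      hence ij': "i < n" "j < n" using Vc Tc by auto
      have "(V * T) $$ (i,j) = (\<Sum>k<n. t i ^ k * coeff (chebU j) k)"
        using ij' by (simp add: V_def T_def scalar_prod_def atLeast0LessThan)
      also have "\<dots> = poly (chebU j) (t i)"
        using poly_sum_lt[of "chebU j" n "t i"] deg[of j] ij' by (simp add: mult.commute)
      finally show "mat n n (\<lambda>(i,j). poly (chebU j) (t i)) $$ (i,j) = (V * T) $$ (i,j)"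
        using ij' by simp
    qed (use Vc Tc in auto)
    hence "det (mat n n (\<lambda>(i,j). poly (chebU j) (t i))) = det V * det T"
      using det_mult[OF Vc Tc] by simp
    thus ?thesis using detT by (simp add: V_def)
  qed
  ultimately show ?thesis using vandermonde[of n t] by (simp add: t_def atLeast0LessThan)
qed



abbreviation xx :: "rat fls" where "xx \<equiv> fls_X"

definition FF :: "nat \<Rightarrow> rat fls" where "FF a = xx ^ a - inverse (xx ^ a)"
definition TT :: "nat \<Rightarrow> rat fls" where "TT a = xx ^ a + inverse (xx ^ a)"
definition WW :: "nat \<Rightarrow> nat \<Rightarrow> rat fls" where
  "WW c m = (\<Prod>b<m. FF (b + 1 + c)) * (\<Prod>b<m. \<Prod>a<b. (TT (a + 1 + c) - TT (b + 1 + c)))"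
definition SS :: "nat \<Rightarrow> nat \<Rightarrow> rat fls" where
  "SS c m = FF (m + 1 + c) * (\<Prod>a<m. (TT (a + 1 + c) - TT (m + 1 + c)))"

lemma WW_Suc: "WW c (Suc m) = WW c m * SS c m"
  by (simp add: WW_def SS_def)

lemma x_nz: "xx \<noteq> 0" by simp

lemma xk1_nz: "k > 0 \<Longrightarrow> xx ^ k - 1 \<noteq> 0"
proof
  assume "k > 0" "xx ^ k - 1 = 0"
  hence "fls_nth (xx ^ k - 1) 0 = 0" by simp
  thus False using \<open>k > 0\<close> by simp
qed

lemma sd_xk1: "k > 0 \<Longrightarrow> fls_subdegree (xx ^ k - 1) = 0"
  by (rule fls_subdegree_eqI) auto

lemma qint_u: "(xx - 1) * qint k = xx ^ k - 1"
  unfolding qint_def by (rule power_diff_1_eq[symmetric])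

lemma u_nz: "xx - 1 \<noteq> 0" using xk1_nz[of 1] by simp

lemma qint_nz: "k > 0 \<Longrightarrow> qint k \<noteq> 0"
  using qint_u[of k] xk1_nz[of k] by auto

lemma sd_qint: "k > 0 \<Longrightarrow> fls_subdegree (qint k) = 0"
proof -
  assume k: "k > 0"
  have "fls_subdegree ((xx - 1) * qint k) = fls_subdegree (xx - 1) + fls_subdegree (qint k)"
    using u_nz qint_nz[OF k] by (rule fls_subdegree_mult)
  thus ?thesis using sd_xk1[OF k] sd_xk1[of 1] by (simp add: qint_u)
qed

lemma qfact_nz: "qfact k \<noteq> 0"
  unfolding qfact_def by (auto simp: qint_nz)

lemma sd_qfact: "fls_subdegree (qfact k) = 0"
  unfolding qfact_def by (subst fls_subdegree_prod) (auto simp: qint_nz sd_qint)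

lemma qfact_Suc: "qfact (Suc k) = qfact k * qint (Suc k)"
  unfolding qfact_def by (simp add: prod.nat_ivl_Suc' mult.commute)

lemma qfact_add: "qfact (n + k) = qfact n * (\<Prod>a<k. qint (n + Suc a))"
  by (induction k) (auto simp: qfact_Suc)

lemma qCat_eq: "qCat n = qfact (2 * n) / (qfact n * qfact n * qint (n + 1))"
  unfolding qCat_def qbinom_def by (simp add: mult_2)

lemma qCat_nz: "qCat n \<noteq> 0"
  unfolding qCat_eq using qfact_nz qint_nz by simp

lemma sd_qCat: "fls_subdegree (qCat n) = 0"
  unfolding qCat_eq using qfact_nz qint_nz sd_qfact sd_qint
  by (simp add: fls_divide_subdegree)

lemma FF_gen:
  fixes X :: "'a::field"
  assumes "X \<noteq> 0"
  shows "X ^ a - inverse (X ^ a) = (X ^ (2 * a) - 1) / X ^ a"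
proof -
  have "X ^ (2 * a) = X ^ a * X ^ a" by (simp add: mult_2 power_add)
  thus ?thesis using assms by (simp add: field_simps)
qed

lemma FF_cf: "FF a = (xx - 1) * qint (2 * a) / xx ^ a"
  unfolding FF_def qint_u by (rule FF_gen) (rule x_nz)

lemma TT_aux:
  fixes y z :: "'a::field"
  assumes "y \<noteq> 0" "z \<noteq> 0"
  shows "y + inverse y - (y * z + inverse (y * z)) = - (z - 1) * (y * y * z - 1) / (y * z)"
  using assms by (simp add: field_simps)

lemma TT_cf:
  assumes "a < b"
  shows "TT a - TT b = - ((xx - 1) * qint (b - a)) * ((xx - 1) * qint (a + b)) / xx ^ b"
proof -
  obtain d where d: "b = a + d" using assms less_imp_add_positive by blast
  have "TT a - TT b = xx ^ a + inverse (xx ^ a) - (xx ^ a * xx ^ d + inverse (xx ^ a * xx ^ d))"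
    by (simp add: TT_def d power_add)
  also have "\<dots> = - (xx ^ d - 1) * (xx ^ a * xx ^ a * xx ^ d - 1) / (xx ^ a * xx ^ d)"
    by (rule TT_aux[OF power_not_zero[OF x_nz] power_not_zero[OF x_nz]])
  also have "\<dots> = - ((xx - 1) * qint (b - a)) * ((xx - 1) * qint (a + b)) / xx ^ b"
    unfolding qint_u by (simp add: d power_add mult_ac)
  finally show ?thesis .
qed


lemma reidx1:
  fixes m :: nat
  shows "(\<Prod>i<m. f (m - i)) = (\<Prod>b<m. f (b + 1))"
proof -
  have "(\<Prod>i<m. f (m - i)) = (\<Prod>i<m. (\<lambda>b. f (b + 1)) (m - Suc i))"
    by (intro prod.cong) (auto simp: Suc_diff_Suc)
  also have "\<dots> = (\<Prod>b<m. f (b + 1))" by (rule prod.nat_diff_reindex)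
  finally show ?thesis .
qed

lemma reidx2:
  fixes m :: nat
  shows "(\<Prod>i<m. \<Prod>k<i. h (m - i) (m - k)) = (\<Prod>b<m. \<Prod>a<b. h (a + 1) (b + 1))"
proof -
  have "(\<Prod>i<m. \<Prod>k<i. h (m - i) (m - k)) = prod (\<lambda>(i,k). h (m - i) (m - k)) (SIGMA i:{..<m}. {..<i})"
    by (rule prod.Sigma) auto
  also have "\<dots> = prod (\<lambda>(b,a). h (a + 1) (b + 1)) (SIGMA b:{..<m}. {..<b})"
    by (rule prod.reindex_bij_witness[where i="\<lambda>(i,k). (m - 1 - k, m - 1 - i)" and j="\<lambda>(i,k). (m - 1 - k, m - 1 - i)"])
       (auto simp: Suc_diff_Suc)
  also have "\<dots> = (\<Prod>b<m. \<Prod>a<b. h (a + 1) (b + 1))"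
    by (rule prod.Sigma[symmetric]) auto
  finally show ?thesis .
qed

lemma E_pos: "fls_X_intpow (int k) = (xx ^ k :: rat fls)"
  by (simp add: fls_X_power_conv_shift_1)

lemma E_neg: "fls_X_intpow (- int k) = inverse (xx ^ k :: rat fls)"
proof -
  have "(xx ^ k :: rat fls) * fls_X_intpow (- int k) = 1"
    unfolding E_pos[symmetric] fls_X_intpow_times_fls_X_intpow by simp
  thus ?thesis by (simp add: inverse_unique)
qed

lemma altC_W:
  assumes mu: "\<And>i. 1 \<le> i \<Longrightarrow> i \<le> m \<Longrightarrow> mu i = int (m - i + 1 + c)"
  shows "altC_ps m mu = WW c m"
proof -
  define z where "z i = (xx ^ (m - i + c) :: rat fls)" for i
  define w where "w i = inverse (z i)" for i
  have zw: "z i * w i = 1" for i by (simp add: w_def z_def)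
  have "altC_ps m mu = det (mat m m (\<lambda>(i,j). fls_X_intpow (int (Suc j) * mu (Suc i)) - fls_X_intpow (- (int (Suc j) * mu (Suc i)))))"
    unfolding altC_ps_def by (rule detm_jnf)
  also have "mat m m (\<lambda>(i,j). fls_X_intpow (int (Suc j) * mu (Suc i)) - fls_X_intpow (- (int (Suc j) * mu (Suc i))))
      = mat m m (\<lambda>(i,j). z i ^ Suc j - w i ^ Suc j)"
  proof (rule cong_mat)
    fix i j assume ij: "i < m" "j < m"
    have h: "mu (Suc i) = int (m - i + c)" using mu[of "Suc i"] ij by simp
    have e: "int (Suc j) * mu (Suc i) = int ((m - i + c) * Suc j)"
      unfolding h of_nat_mult by (rule mult.commute)
    show "(case (i, j) of (i, j) \<Rightarrow> fls_X_intpow (int (Suc j) * mu (Suc i)) - fls_X_intpow (- (int (Suc j) * mu (Suc i)))) =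
          (case (i, j) of (i, j) \<Rightarrow> z i ^ Suc j - w i ^ Suc j)"
      unfolding e case_prod_conv E_pos E_neg w_def z_def power_inverse power_mult ..
  qed auto
  also have "det (mat m m (\<lambda>(i,j). z i ^ Suc j - w i ^ Suc j))
     = (\<Prod>i<m. z i - w i) * (\<Prod>i<m. \<Prod>k<i. ((z i + w i) - (z k + w k)))"
    by (rule det_cheb[OF zw])
  also have "\<dots> = (\<Prod>i<m. FF (m - i + c)) * (\<Prod>i<m. \<Prod>k<i. (TT (m - i + c) - TT (m - k + c)))"
    by (simp add: z_def w_def FF_def TT_def)
  also have "\<dots> = WW c m"
    unfolding WW_def
    using reidx1[of "\<lambda>a. FF (a + c)" m] reidx2[of "\<lambda>a b. TT (a + c) - TT (b + c)" m]
    by simp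
  finally show ?thesis .
qed

lemma g1: "- (A::'a::field) * (u * B) / D = (- A * u) * B / D"
  by (simp add: algebra_simps)

lemma g2: "(\<Prod>a<m. P a * Q a / (D::'a::field)) = (\<Prod>a<m. P a) * (\<Prod>a<m. Q a) / D ^ m"
  by (simp add: prod_dividef prod.distrib)

lemma g3:
  fixes X :: "'a::field"
  assumes "X \<noteq> 0"
  shows "u * q / X ^ b * (C * Q / (X ^ b) ^ m) = u * (q * Q) * C / X ^ (b * Suc m)"
  using assms by (simp add: field_simps power_mult[symmetric] power_add)

lemma SS_cf:
  "SS c m = (xx - 1) * (qint (2 * (m + 1 + c)) * (\<Prod>a<m. qint (m + 1 + 2 * c + Suc a)))
      * (\<Prod>a<m. - ((xx - 1) * qint (m - a)) * (xx - 1)) / xx ^ ((m + 1 + c) * Suc m)"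
proof -
  have "(\<Prod>a<m. (TT (a + 1 + c) - TT (m + 1 + c)))
     = (\<Prod>a<m. (- ((xx - 1) * qint (m - a)) * (xx - 1)) * qint (m + 1 + 2 * c + Suc a) / xx ^ (m + 1 + c))"
  proof (rule prod.cong)
    fix a assume "a \<in> {..<m}"
    hence a: "a + 1 + c < m + 1 + c" by simp
    have e1: "m + 1 + c - (a + 1 + c) = m - a" by simp
    have e2: "a + 1 + c + (m + 1 + c) = m + 1 + 2 * c + Suc a" by simp
    show "TT (a + 1 + c) - TT (m + 1 + c) = (- ((xx - 1) * qint (m - a)) * (xx - 1)) * qint (m + 1 + 2 * c + Suc a) / xx ^ (m + 1 + c)"
      unfolding TT_cf[OF a] e1 e2 by (rule g1)
  qed simp
  also have "\<dots> = (\<Prod>a<m. - ((xx - 1) * qint (m - a)) * (xx - 1)) * (\<Prod>a<m. qint (m + 1 + 2 * c + Suc a)) / (xx ^ (m + 1 + c)) ^ m"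
    by (rule g2)
  finally have p: "(\<Prod>a<m. (TT (a + 1 + c) - TT (m + 1 + c))) = \<dots>" .
  show ?thesis unfolding SS_def p FF_cf by (rule g3[OF x_nz])
qed


lemma Kgen:
  fixes A B Cc Z P0 P1 R0 R1 u C Y :: "'a::field"
  assumes "A \<noteq> 0" "B \<noteq> 0" "Cc \<noteq> 0" "Y \<noteq> 0" "Z \<noteq> 0" "P0 = R0 * A" "P1 = R1 * (A * B * Cc)"
  shows "Y * (P0 / (A * A * B)) * (u * R1 * C / (Y * Z)) = (u * R0 * C / Z) * (P1 / ((A * B) * (A * B) * Cc))"
  unfolding assms(6,7) using assms(1-5) by (simp add: field_simps)

lemma K: "xx ^ Suc m * qCat (Suc m) * SS 1 m = SS 0 m * qCat (Suc (Suc m))"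
proof -
  define u where "u = (xx - 1 :: rat fls)"
  define C where "C = (\<Prod>a<m. - ((xx - 1) * qint (m - a)) * (xx - 1))"
  define R0 where "R0 = qint (2 * (m + 1 + 0)) * (\<Prod>a<m. qint (m + 1 + 2 * 0 + Suc a))"
  define R1 where "R1 = qint (2 * (m + 1 + 1)) * (\<Prod>a<m. qint (m + 1 + 2 * 1 + Suc a))"
  define A where "A = qfact (Suc m)"
  define B where "B = qint (Suc (Suc m))"
  define Cc where "Cc = qint (Suc (Suc (Suc m)))"
  define Z where "Z = (xx ^ ((m + 1 + 0) * Suc m) :: rat fls)"
  have S0: "SS 0 m = u * R0 * C / Z"
    unfolding SS_cf[of 0 m] u_def R0_def C_def Z_def ..
  have ex: "(m + 1 + 1) * Suc m = Suc m + (m + 1 + 0) * Suc m" by simp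
  have "(xx ^ ((m + 1 + 1) * Suc m) :: rat fls) = xx ^ (Suc m + (m + 1 + 0) * Suc m)"
    by (simp only: ex)
  also have "\<dots> = xx ^ Suc m * Z" by (simp only: power_add Z_def)
  finally have ex2: "(xx ^ ((m + 1 + 1) * Suc m) :: rat fls) = xx ^ Suc m * Z" .
  have S1: "SS 1 m = u * R1 * C / (xx ^ Suc m * Z)"
    unfolding SS_cf[of 1 m] u_def R1_def C_def ex2 ..
  have qa: "qfact (m + 1 + 2 * c + Suc m) = qfact (m + 1 + 2 * c) * (qint (2 * (m + 1 + c)) * (\<Prod>a<m. qint (m + 1 + 2 * c + Suc a)))" for c
  proof -
    have 1: "qfact (m + 1 + 2 * c + Suc m) = qfact (m + 1 + 2 * c) * (\<Prod>a<Suc m. qint (m + 1 + 2 * c + Suc a))"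
      by (rule qfact_add)
    have 2: "(\<Prod>a<Suc m. qint (m + 1 + 2 * c + Suc a)) = (\<Prod>a<m. qint (m + 1 + 2 * c + Suc a)) * qint (m + 1 + 2 * c + Suc m)"
      by (rule prod.lessThan_Suc)
    have 3: "qint (m + 1 + 2 * c + Suc m) = qint (2 * (m + 1 + c))" by (rule arg_cong[where f=qint]) simp
    show ?thesis unfolding 1 2 3 by (simp only: mult_ac)
  qed
  have fA2: "qfact (Suc (Suc m)) = A * B" unfolding A_def B_def by (rule qfact_Suc)
  have fA3: "qfact (Suc (Suc (Suc m))) = A * B * Cc" unfolding fA2[symmetric] Cc_def by (rule qfact_Suc)
  have P0: "qfact (2 * Suc m) = R0 * A"
  proof -
    have "qfact (2 * Suc m) = qfact (m + 1 + 2 * 0 + Suc m)" by (rule arg_cong[where f=qfact]) simp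
    also have "\<dots> = qfact (m + 1 + 2 * 0) * R0" unfolding qa[of 0] R0_def ..
    finally show ?thesis by (simp add: A_def mult_ac)
  qed
  have P1: "qfact (2 * Suc (Suc m)) = R1 * (A * B * Cc)"
  proof -
    have "qfact (2 * Suc (Suc m)) = qfact (m + 1 + 2 * 1 + Suc m)" by (rule arg_cong[where f=qfact]) simp
    also have "\<dots> = qfact (m + 1 + 2 * 1) * R1" unfolding qa[of 1] R1_def ..
    also have "qfact (m + 1 + 2 * 1) = A * B * Cc" using fA3 by simp
    finally show ?thesis by (simp only: mult_ac)
  qed
  have Q1: "qCat (Suc m) = qfact (2 * Suc m) / (A * A * B)"
    unfolding qCat_eq A_def B_def by simp
  have Q2: "qCat (Suc (Suc m)) = qfact (2 * Suc (Suc m)) / ((A * B) * (A * B) * Cc)"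
    unfolding qCat_eq fA2[symmetric] Cc_def by simp
  have nzA: "A \<noteq> 0" "B \<noteq> 0" "Cc \<noteq> 0" "Z \<noteq> 0" "(xx ^ Suc m :: rat fls) \<noteq> 0"
    by (simp_all add: A_def B_def Cc_def Z_def qfact_nz qint_nz)
  show ?thesis
    unfolding Q1 Q2 S0 S1 by (rule Kgen[OF nzA(1,2,3,5,4) P0 P1])
qed

lemma step_alg:
  fixes a w1 w0 q y s1 s0 q' :: "'a::comm_ring_1"
  assumes "a * w1 = w0 * q" "y * q * s1 = s0 * q'"
  shows "(y * a) * (w1 * s1) = (w0 * s0) * q'"
proof -
  have "(y * a) * (w1 * s1) = y * s1 * (a * w1)" by (simp only: mult_ac)
  also have "\<dots> = w0 * (y * q * s1)" unfolding assms(1) by (simp only: mult_ac)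
  also have "\<dots> = (w0 * s0) * q'" unfolding assms(2) by (simp only: mult_ac)
  finally show ?thesis .
qed

lemma qint1: "qint 1 = 1" "qint (Suc 0) = 1" unfolding qint_def by simp_all

lemma qCat1: "qCat 1 = 1"
proof -
  have "qfact 1 = 1" by (simp add: qfact_def qint1)
  moreover have "qfact 2 = qint 2" using qfact_Suc[of 1] \<open>qfact 1 = 1\<close> by (simp add: numeral_2_eq_2)
  ultimately show ?thesis using qint_nz[of 2] by (simp add: qCat_eq numeral_2_eq_2)
qed

lemma keyW: "xx ^ (Suc m choose 2) * WW 1 m = WW 0 m * qCat (Suc m)"
proof (induction m)
  case 0
  have q: "qCat (Suc 0) = 1" using qCat1 by simp
  have c0: "Suc 0 choose 2 = 0" by (simp add: numeral_2_eq_2)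
  show ?case unfolding c0 q by (simp add: WW_def)
next
  case (Suc m)
  have c: "Suc (Suc m) choose 2 = Suc m + (Suc m choose 2)" by (simp add: numeral_2_eq_2)
  have "(xx ^ (Suc (Suc m) choose 2) :: rat fls) = xx ^ Suc m * xx ^ (Suc m choose 2)"
    by (simp only: c power_add)
  thus ?case unfolding WW_Suc by (simp only: step_alg[OF Suc.IH K])
qed

lemma WW0_nz: "WW 0 m \<noteq> 0"
proof -
  have "FF (b + 1 + 0) \<noteq> 0" for b
    unfolding FF_cf using u_nz qint_nz[of "2 * (b + 1 + 0)"] by simp
  moreover have "TT (a + 1 + 0) - TT (b + 1 + 0) \<noteq> 0" if "a < b" for a b
  proof -
    have ab: "a + 1 + 0 < b + 1 + 0" using that by simp
    show ?thesis unfolding TT_cf[OF ab] using u_nz qint_nz[of "b + 1 + 0 - (a + 1 + 0)"] qint_nz[of "a + 1 + 0 + (b + 1 + 0)"] that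
      by simp
  qed
  ultimately show ?thesis unfolding WW_def by (simp add: prod_zero_iff)
qed

lemma div_alg:
  fixes w0 w1 y q :: "'a::field"
  assumes "w0 \<noteq> 0" "y * w1 = w0 * q"
  shows "y * (w1 / w0) = q"
proof -
  have "y * (w1 / w0) = (y * w1) / w0" by simp
  also have "\<dots> = q" unfolding assms(2) using assms(1) by simp
  finally show ?thesis .
qed

theorem theorem5p2:
  fixes n :: nat
  assumes "n \<ge> 2"
  shows "npsC (n - 1) (omegaC (n - 1)) = fls_X ^ (n choose 2) * psC (n - 1) (omegaC (n - 1))
       \<and> fls_X ^ (n choose 2) * psC (n - 1) (omegaC (n - 1)) = qCat n"
proof -
  obtain m where n: "n = Suc m" using assms by (cases n) auto
  have nm: "n - 1 = m" using n by simp
  have A0: "altC_ps m (rhoC m) = WW 0 m"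
    by (rule altC_W) (simp add: rhoC_def of_nat_diff)
  have A1: "altC_ps m (\<lambda>i. omegaC m i + rhoC m i) = WW 1 m"
    by (rule altC_W) (simp add: rhoC_def omegaC_def of_nat_diff)
  define ps where "ps = psC m (omegaC m)"
  have ps: "ps = WW 1 m / WW 0 m" unfolding ps_def psC_def A0 A1 ..
  have main: "fls_X ^ (n choose 2) * ps = qCat n"
    unfolding ps n by (rule div_alg[OF WW0_nz keyW])
  have psnz: "ps \<noteq> 0" using main qCat_nz[of n] by auto
  have "fls_subdegree (fls_X ^ (n choose 2) * ps) = fls_subdegree ps + int (n choose 2)"
    by (rule fls_subdegree_mult_fls_X_power(1)[OF psnz])
  hence sd: "fls_subdegree ps = - int (n choose 2)" unfolding main sd_qCat by simp
  have "npsC m (omegaC m) = fls_shift (- int (n choose 2)) ps"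
    unfolding npsC_def ps_def[symmetric] sd ..
  also have "\<dots> = fls_X ^ (n choose 2) * ps" by (rule fls_X_power_times_conv_shift(1)[symmetric])
  finally show ?thesis unfolding nm ps_def[symmetric] using main by simp
qed


end
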